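(* Let $0<x_1<x_2<x_3\le 1$. Then there is a unique $x'\in(x_1,x_3)$ with $$\frac{x'-x_1}{x'}+\ln\frac{x_3}{x'}=\frac{x_2-x_1}{x_2}+\frac{x_3-x_2}{x_3},$$ and this $x'$ satisfies $$T_h(x_1,x')+\mathcal H(x',x_3)\le T_h(x_1,x_2)+T_h(x_2,x_3).$$
   Context: For $a,b>0$ define $$T_h(a,b):=\tfrac12\Bigl(\tfrac1a-\tfrac1b+b-a\Bigr)\Bigl(a+\tfrac1b\Bigr),\qquad \mathcal H(a,b):=\ln\frac ba+\frac14\,(b^2-a^2)-\frac14\,(b^{-2}-a^{-2}),$$ with $\ln$ the natural logarithm. (In the paper this says that two consecutive "steps" between hyperbola points with abscissae $x_1<x_2<x_3\le1$ can be replaced by one step followed by one slide with the same area contribution and no larger crown.) *)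

theory Defs
  imports Complex_Main
begin

definition T_h :: "real \<Rightarrow> real \<Rightarrow> real" where
  "T_h a b = (1/2) * (1/a - 1/b + b - a) * (a + 1/b)"

definition H_fun :: "real \<Rightarrow> real \<Rightarrow> real" where
  "H_fun a b = ln (b / a) + (1/4) * (b^2 - a^2) - (1/4) * (1/b^2 - 1/a^2)"

end

theory Submission
  imports Defs
begin

lemma A_deriv:
  fixes b c u :: real
  assumes "0 < b" "b < u" "0 < c"
  defines "A \<equiv> \<lambda>u. b*u*(ln (u/c) + 1 - b/c)/(u-b)"
  shows "(A has_real_derivative (b*(u - A u)/(u*(u-b)))) (at u)"
proof -
  have "(A has_real_derivative
     ((b*(ln (u/c) + 1 - b/c) + b*u*(1/u))*(u-b) - b*u*(ln (u/c) + 1 - b/c))/((u-b)^2)) (at u)"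
    unfolding A_def using assms
    by (auto intro!: derivative_eq_intros simp: field_simps power2_eq_square)
  moreover have "((b*(ln (u/c) + 1 - b/c) + b*u*(1/u))*(u-b) - b*u*(ln (u/c) + 1 - b/c))/((u-b)^2)
      = b*(u - A u)/(u*(u-b))"
  proof -
    have n1: "u - b \<noteq> 0" "u \<noteq> 0" using assms by auto
    have gen: "\<And>L. ((b*L + b*u*(1/u))*(u-b) - b*u*L)/((u-b)^2) = b*(u - b*u*L/(u-b))/(u*(u-b))"
    proof -
      fix L
      obtain d where d: "u = b + d" "d \<noteq> 0" using n1 by (metis add_diff_cancel_left' diff_add_cancel right_minus_eq)
      have "b + d \<noteq> 0" using n1 d by simp
      then show "((b*L + b*u*(1/u))*(u-b) - b*u*L)/((u-b)^2) = b*(u - b*u*L/(u-b))/(u*(u-b))"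
        unfolding d(1) using d(2) by (simp add: field_simps power2_eq_square)
    qed
    show ?thesis unfolding A_def by (rule gen)
  qed
  ultimately show ?thesis by simp
qed

lemma G_alg:
  fixes p b u D :: real
  assumes "p \<noteq> 0" "b \<noteq> 0" "u \<noteq> 0" "u - b \<noteq> 0" "D = b*(u - p)/(u*(u-b))"
  shows "(1 / (u * u) - D / (p * p) + 1 - D) * (p + 1 / u) / 2 +
        (D - 1 / (u * u)) * (1 / p - 1 / u + u - p) / 2 +
        (- (1 / u) - u / 2 - u / (2 * u ^ 4)) -
        ((- (D / (p * p)) - D) * (p + 1 / b) / 2 +
         D * (1 / p - 1 / b + b - p) / 2) =
        (u - p) * ((u - p) / (2 * p\<^sup>2 * u\<^sup>2) + (b - u) / 2) / u"
proof -
  define X where "X = (1/(u*u)+1)*(p+1/u)/2 - (1/(u*u))*(1/p - 1/u + u - p)/2 - 1/u - u/2 - u/(2*u^4)"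
  define Y where "Y = (u-b)/2*((1/p^2+2)/(u*b)+1)"
  have e1: "(1 / (u * u) - D / (p * p) + 1 - D) * (p + 1 / u) / 2 +
        (D - 1 / (u * u)) * (1 / p - 1 / u + u - p) / 2 +
        (- (1 / u) - u / 2 - u / (2 * u ^ 4)) -
        ((- (D / (p * p)) - D) * (p + 1 / b) / 2 +
         D * (1 / p - 1 / b + b - p) / 2) = X + D*Y"
    unfolding X_def Y_def using assms(1-3) by (simp add: field_simps power2_eq_square power4_eq_xxxx)
  have e2: "D*Y = (u-p)/(2*u)*((1/p^2+2)/u + b)"
  proof -
    have "D*(u-b) = b*(u-p)/u" unfolding assms(5) using assms(3,4) by (simp add: field_simps)
    then have "D*Y = (b*(u-p)/u)/2*((1/p^2+2)/(u*b)+1)" unfolding Y_def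
      by (metis (no_types, lifting) mult.assoc mult.commute times_divide_eq_left)
    also have "... = (u-p)/(2*u)*((1/p^2+2)/u + b)" using assms(1-3)
      by (simp add: field_simps power2_eq_square)
    finally show ?thesis .
  qed
  have e3: "X + (u-p)/(2*u)*((1/p^2+2)/u + b) = (u - p) * ((u - p) / (2 * p\<^sup>2 * u\<^sup>2) + (b - u) / 2) / u"
    unfolding X_def using assms(1-3) by (simp add: field_simps power2_eq_square power4_eq_xxxx)
  show ?thesis using e1 e2 e3 by simp
qed

lemma G_deriv:
  fixes A :: "real \<Rightarrow> real" and b c u D :: real
  assumes "0 < b" "b < u" "0 < c" "0 < A u" "(A has_real_derivative D) (at u)"
    "D = b*(u - A u)/(u*(u-b))"
  shows "((\<lambda>u. T_h (A u) u + H_fun u c - T_h (A u) b - T_h b c) has_real_derivative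
     ((u - A u)/u * ((u - A u)/(2*(A u)^2*u^2) + (b-u)/2))) (at u)"
  unfolding T_h_def H_fun_def using assms(1-5)
  apply (intro derivative_eq_intros)
                      apply auto
  apply (rule G_alg)
  using assms by auto

lemma ln_strict: fixes t :: real assumes "0 < t" "t \<noteq> 1" shows "ln t < t - 1"
proof -
  have s: "sqrt t > 0" "sqrt t \<noteq> 1" using assms by auto
  have "ln t = 2 * ln (sqrt t)" using assms by (simp add: ln_sqrt)
  also have "... \<le> 2 * (sqrt t - 1)" using ln_le_minus_one[OF s(1)] by simp
  also have "... < t - 1"
  proof -
    have "(sqrt t - 1)^2 > 0" using s by simp
    then show ?thesis using assms by (simp add: power2_eq_square algebra_simps)
  qed
  finally show ?thesis .
qed

lemma f_dec:
  fixes a c x y :: real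
  assumes "0 < a" "a < x" "x < y" "0 < c"
  shows "(y - a)/y + ln (c/y) < (x - a)/x + ln (c/x)"
proof -
  have "ln (y/x) \<ge> 1 - x/y"
    using ln_le_minus_one[of "x/y"] assms by (simp add: ln_div)
  moreover have "1 - x/y > a/x - a/y"
  proof -
    have "a/x - a/y = (a/x) * (1 - x/y)" using assms by (simp add: field_simps)
    moreover have "a/x < 1" "1 - x/y > 0" using assms by auto
    ultimately have "(a/x) * (1 - x/y) < 1 * (1 - x/y)"
      by (intro mult_strict_right_mono) auto
    then show ?thesis using \<open>a/x - a/y = (a/x) * (1 - x/y)\<close> by simp
  qed
  moreover have "ln (c/x) = ln (c/y) + ln (y/x)" using assms by (simp add: ln_div)
  moreover have "(y - a)/y = 1 - a/y" "(x-a)/x = 1 - a/x" using assms by (auto simp: field_simps)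
  ultimately show ?thesis by linarith
qed

lemma G_nonneg:
  fixes p u b :: real
  assumes "0 < p" "p \<le> b" "b < u" "u \<le> 1"
  shows "0 \<le> (u - p)/u * ((u - p)/(2*p^2*u^2) + (b-u)/2)"
proof -
  have pu: "p*u \<le> 1" using assms by (intro mult_le_one) auto
  have "(p*u)^2 \<le> 1" using pu assms by (intro power_le_one) auto
  then have q: "2*p^2*u^2 \<le> 2" by (simp add: power_mult_distrib)
  have q0: "0 < 2*p^2*u^2" using assms by simp
  have "(u-p)/2 \<le> (u - p)/(2*p^2*u^2)"
    using q q0 assms by (intro divide_left_mono) auto
  moreover have "0 \<le> (u-p)/2 + (b-u)/2" using assms by (simp add: field_simps)
  ultimately have "(u - p)/(2*p^2*u^2) + (b-u)/2 \<ge> 0" by linarith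
  moreover have "(u-p)/u \<ge> 0" using assms by simp
  ultimately show ?thesis by (metis mult_nonneg_nonneg)
qed


lemma A_le:
  fixes b c u :: real
  assumes "0 < b" "b < u" "u \<le> c"
  shows "b*u*(ln (u/c) + 1 - b/c)/(u-b) \<le> b"
proof -
  have "ln (u/c) \<le> u/c - 1" using assms by (intro ln_le_minus_one) auto
  then have "u*(ln (u/c) + 1 - b/c) \<le> u*(u/c - b/c)" using assms
    by (intro mult_left_mono) auto
  also have "u*(u/c - b/c) = u*(u-b)/c" using assms by (simp add: field_simps)
  also have "... \<le> c*(u-b)/c" using assms by (intro divide_right_mono mult_right_mono) auto
  also have "... = u - b" using assms by simp
  finally have "u*(ln (u/c) + 1 - b/c) \<le> u - b" .
  then have "b*(u*(ln (u/c) + 1 - b/c)) \<le> b*(u-b)" using assms by (intro mult_left_mono) auto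
  then have "b*u*(ln (u/c) + 1 - b/c) \<le> b*(u-b)" by (simp add: mult.assoc)
  then show ?thesis using assms by (simp add: pos_divide_le_eq)
qed

theorem mainTheorem3:
  fixes x1 x2 x3 :: real
  assumes "0 < x1" and "x1 < x2" and "x2 < x3" and "x3 \<le> 1"
  shows "(\<exists>!x'. x1 < x' \<and> x' < x3 \<and>
            (x' - x1) / x' + ln (x3 / x') = (x2 - x1) / x2 + (x3 - x2) / x3)
       \<and> (\<forall>x'. x1 < x' \<and> x' < x3 \<and>
            (x' - x1) / x' + ln (x3 / x') = (x2 - x1) / x2 + (x3 - x2) / x3
            \<longrightarrow> T_h x1 x' + H_fun x' x3 \<le> T_h x1 x2 + T_h x2 x3)"
proof -
  define a where "a = x1"
  define b where "b = x2"
  define c where "c = x3"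
  define R where "R = (b - a) / b + (c - b) / c"
  define f where "f = (\<lambda>x. (x - a)/x + ln (c/x))"
  have ab: "0 < a" "a < b" "b < c" "c \<le> 1" using assms unfolding a_def b_def c_def by auto
  have fc: "f c < R"
  proof -
    have "f c = (c-a)/c" unfolding f_def using ab by simp
    moreover have "(c-a)/c = (b-a)/c + (c-b)/c" using ab by (simp add: field_simps)
    moreover have "(b-a)/c < (b-a)/b" using ab by (simp add: divide_strict_left_mono)
    ultimately show ?thesis unfolding R_def by linarith
  qed
  have fb: "f b > R"
  proof -
    have "ln (b/c) < b/c - 1" using ab by (intro ln_strict) auto
    moreover have "ln (c/b) = - ln (b/c)" using ab by (simp add: ln_div)
    moreover have "(c-b)/c = 1 - b/c" using ab by (simp add: field_simps)
    ultimately show ?thesis unfolding f_def R_def by linarith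
  qed
  have fdec: "\<And>x y. a < x \<Longrightarrow> x < y \<Longrightarrow> f y < f x"
    unfolding f_def using ab by (intro f_dec) auto
  have ex: "\<exists>x. a < x \<and> x < c \<and> f x = R"
  proof -
    have "continuous_on {b..c} f" unfolding f_def using ab
      by (intro continuous_intros) auto
    then obtain x where x: "b \<le> x" "x \<le> c" "f x = R"
      using IVT2'[of f c R b] fc fb ab by force
    then have "x \<noteq> b" "x \<noteq> c" using fc fb by auto
    then show ?thesis using x ab by (intro exI[of _ x]) auto
  qed
  have uniq: "\<And>x y. a < x \<Longrightarrow> a < y \<Longrightarrow> f x = R \<Longrightarrow> f y = R \<Longrightarrow> x = y"
    by (metis fdec linorder_neqE_linordered_idom order_less_irrefl)
  have part2: "T_h a u0 + H_fun u0 c \<le> T_h a b + T_h b c"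
    if u0: "a < u0" "u0 < c" "f u0 = R" for u0
  proof -
    have bu0: "b < u0"
    proof (rule ccontr)
      assume "\<not> b < u0"
      then consider "u0 = b" | "u0 < b" by linarith
      then show False
      proof cases
        case 1 then show ?thesis using fb u0 by simp
      next
        case 2 then have "f b < f u0" using fdec u0 by blast
        then show ?thesis using fb u0 by simp
      qed
    qed
    define A where "A = (\<lambda>u. b*u*(ln (u/c) + 1 - b/c)/(u-b))"
    have Ad: "(A has_real_derivative (b*(u - A u)/(u*(u-b)))) (at u)" if "b < u" for u
      unfolding A_def using ab that by (intro A_deriv) auto
    have Au0: "A u0 = a"
    proof -
      have e: "(u0 - a)/u0 + ln (c/u0) = (b - a) / b + (c - b) / c" using u0 unfolding f_def R_def by simp
      have l: "ln (u0/c) = - ln (c/u0)" using ab bu0 by (simp add: ln_div)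
      have "u0 - b \<noteq> 0" "u0 \<noteq> 0" using bu0 ab by auto
      then show ?thesis unfolding A_def l using e ab
        by (simp add: field_simps)
    qed
    have Ale: "A u \<le> b" if "b < u" "u \<le> c" for u
      unfolding A_def using that ab by (intro A_le) auto
    have Age: "A u \<ge> a" if "u0 \<le> u" "u \<le> c" for u
    proof -
      have "A u0 \<le> A u"
      proof (rule DERIV_nonneg_imp_increasing_open[OF that(1)])
        fix x assume x: "u0 < x" "x < u"
        have "A x \<le> b" using Ale[of x] x that bu0 by force
        then have "0 \<le> b*(x - A x)/(x*(x-b))" using x bu0 ab
          by (intro divide_nonneg_nonneg mult_nonneg_nonneg) auto
        then show "\<exists>y. (A has_real_derivative y) (at x) \<and> 0 \<le> y" using Ad[of x] x bu0 by auto
      next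
        show "continuous_on {u0..u} A"
        proof (intro continuous_at_imp_continuous_on ballI)
          fix x assume "x \<in> {u0..u}"
          then have "b < x" using bu0 by auto
          then show "isCont A x" using Ad[of x] by (meson DERIV_isCont)
        qed
      qed
      then show ?thesis using Au0 by simp
    qed
    define G where "G = (\<lambda>u. T_h (A u) u + H_fun u c - T_h (A u) b - T_h b c)"
    have Gd: "(G has_real_derivative ((u - A u)/u * ((u - A u)/(2*(A u)^2*u^2) + (b-u)/2))) (at u)"
      if "u0 \<le> u" "u \<le> c" for u
    proof -
      have "0 < A u" using Age[OF that] ab by force
      moreover have bu: "b < u" using that bu0 by linarith
      ultimately show ?thesis unfolding G_def
        by (intro G_deriv[OF _ _ _ _ Ad[OF bu] refl]) (use ab in auto)
    qed
    have "G u0 \<le> G c"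
    proof (rule DERIV_nonneg_imp_increasing_open[of u0 c G])
      show "u0 \<le> c" using u0 by simp
    next
      fix x assume x: "u0 < x" "x < c"
      have "0 \<le> (x - A x)/x * ((x - A x)/(2*(A x)^2*x^2) + (b-x)/2)"
      proof -
        have p1: "0 < A x" using Age[of x] x ab by force
        have p2: "A x \<le> b" using Ale[of x] x bu0 by force
        have p3: "b < x" "x \<le> 1" using x bu0 ab by auto
        show ?thesis by (rule G_nonneg[OF p1 p2 p3])
      qed
      then show "\<exists>y. (G has_real_derivative y) (at x) \<and> 0 \<le> y" using Gd[of x] x by auto
    next
      show "continuous_on {u0..c} G"
      proof (intro continuous_at_imp_continuous_on ballI)
        fix x assume "x \<in> {u0..c}"
        then show "isCont G x" using Gd[of x] by (meson DERIV_isCont atLeastAtMost_iff)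
      qed
    qed
    moreover have "G c = 0"
    proof -
      have "A c = b" unfolding A_def using ab by (simp add: field_simps)
      then show ?thesis unfolding G_def T_h_def H_fun_def using ab by simp
    qed
    moreover have "G u0 = T_h a u0 + H_fun u0 c - T_h a b - T_h b c" unfolding G_def Au0 ..
    ultimately show ?thesis by simp
  qed
  show ?thesis
    unfolding a_def[symmetric] b_def[symmetric] c_def[symmetric]
  proof (intro conjI allI impI)
    show "\<exists>!x'. a < x' \<and> x' < c \<and> (x' - a) / x' + ln (c / x') = (b - a) / b + (c - b) / c"
    proof -
      obtain x where x: "a < x" "x < c" "f x = R" using ex by blast
      show ?thesis
      proof (rule ex1I[of _ x])
        show "a < x \<and> x < c \<and> (x - a) / x + ln (c / x) = (b - a) / b + (c - b) / c"
          using x unfolding f_def R_def by simp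
      next
        fix y assume y: "a < y \<and> y < c \<and> (y - a) / y + ln (c / y) = (b - a) / b + (c - b) / c"
        then have "f y = R" unfolding f_def R_def by simp
        then show "y = x" using uniq[of y x] x y by blast
      qed
    qed
  next
    fix x' assume "a < x' \<and> x' < c \<and> (x' - a) / x' + ln (c / x') = (b - a) / b + (c - b) / c"
    then show "T_h a x' + H_fun x' c \<le> T_h a b + T_h b c"
    proof -
      have "f x' = R" using \<open>a < x' \<and> _\<close> unfolding f_def R_def by simp
      then show ?thesis using part2[of x'] \<open>a < x' \<and> _\<close> by blast
    qed
  qed
qed

end
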